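(* Let $n\ge 2$, let $a$ be the smallest prime divisor of $n$, and let $q$ be any prime power. Then $$\frac{1}{a}\prod_{\substack{k=1\\ a\nmid k}}^{n-1}(q^n-q^k)\ge q^{n(n-(n/a)-1)},$$ with equality only when $(n,q)=(2,2)$ or $(n,q)=(3,2)$. *)

theory Defs
  imports Complex_Main "HOL-Computational_Algebra.Primes"
begin

end

theory Submission
  imports Defs
begin

lemma prodall:
  fixes q n :: nat assumes "q \<ge> 1"
  shows "(\<Prod>k=1..n-1. q^n - q^k) = q^(\<Sum>k=1..n-1. k) * (\<Prod>j=1..n-1. q^j - 1)"
proof -
  have "(\<Prod>k=1..n-1. q^n - q^k) = (\<Prod>k=1..n-1. q^k * (q^(n-k) - 1))"
  proof (rule prod.cong[OF refl])
    fix k assume "k \<in> {1..n-1}"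
    then have "k + (n-k) = n" by auto
    then have e: "q^n = q^k * q^(n-k)" by (metis power_add)
    show "q^n - q^k = q^k * (q^(n-k) - 1)" unfolding e diff_mult_distrib2 by simp
  qed
  also have "\<dots> = (\<Prod>k=1..n-1. q^k) * (\<Prod>k=1..n-1. q^(n-k) - 1)"
    by (rule prod.distrib)
  also have "(\<Prod>k=1..n-1. q^k) = q^(\<Sum>k=1..n-1. k)"
    by (rule power_sum[symmetric])
  also have "(\<Prod>k=1..n-1. q^(n-k) - 1) = (\<Prod>j=1..n-1. q^j - 1)"
  proof -
    have "(\<Prod>j=1..n-1. q^j - 1) = (\<Prod>k=1..n-1. q^(n-1+1-k) - 1)" by (rule prod.atLeastAtMost_rev)
    also have "\<dots> = (\<Prod>k=1..n-1. q^(n-k) - 1)" by (rule prod.cong) auto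
    finally show ?thesis by simp
  qed
  finally show ?thesis .
qed

lemma aux: fixes A B C x :: int shows "A - B = C - x - 2 \<Longrightarrow> 2*(x+1) \<le> C \<Longrightarrow> x \<ge> 0 \<Longrightarrow> B \<le> A" by arith
lemma aux2: fixes A B C x :: int shows "A - B = C - x - 2 \<Longrightarrow> 2*(x+1) \<le> C \<Longrightarrow> x \<ge> 1 \<Longrightarrow> B < A" by arith
lemma aux3: fixes A B C :: int shows "A - B = C - 0 - 2 \<Longrightarrow> 9 \<le> C \<Longrightarrow> B < A" by arith

lemma key:
  fixes q m :: nat assumes "q \<ge> 2"
  shows "(m+3) * q^(m+1) \<le> (m+2) * (q^(m+2) - 1)"
    and "q \<ge> 3 \<or> m \<ge> 1 \<Longrightarrow> (m+3) * q^(m+1) < (m+2) * (q^(m+2) - 1)"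
proof -
  have q1: "q^(m+1) \<ge> 2" using assms
  proof -
    have "q^1 \<le> q^(m+1)" using assms by (intro power_increasing) auto
    then show ?thesis using assms by (metis power_one_right order_trans)
  qed
  have e: "int ((m+2) * (q^(m+2) - 1)) - int ((m+3) * q^(m+1)) = int (q^(m+1)) * (int (m+2) * int q - int m - 3) - int m - 2"
  proof -
    have h: "1 \<le> q^(m+2)" using assms by simp
    have "int ((m+2) * (q^(m+2) - 1)) = int (m+2) * (int q^(m+2) - 1)"
      by (subst of_nat_mult, subst of_nat_diff[OF h]) simp
    then show ?thesis by (simp add: algebra_simps power_add)
  qed
  have g: "int (m+2) * int q - int m - 3 \<ge> int m + 1" 
  proof -
    have "int m * int q \<ge> int m * 2" using assms by (intro mult_left_mono) auto
    then show ?thesis using assms by (simp add: algebra_simps)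
  qed
  have "int (q^(m+1)) * (int (m+2) * int q - int m - 3) \<ge> 2 * (int m + 1)"
  proof -
    have "int (q^(m+1)) \<ge> 2" using q1 by linarith
    then show ?thesis using g by (intro mult_mono) auto
  qed
  then have "int ((m+3) * q^(m+1)) \<le> int ((m+2) * (q^(m+2) - 1))" using e by (intro aux[OF e]) auto
  then show "(m+3) * q^(m+1) \<le> (m+2) * (q^(m+2) - 1)" by (simp only: of_nat_le_iff)
  assume h: "q \<ge> 3 \<or> m \<ge> 1"
  show "(m+3) * q^(m+1) < (m+2) * (q^(m+2) - 1)"
  proof (cases "m \<ge> 1")
    case True
    then have "int ((m+3) * q^(m+1)) < int ((m+2) * (q^(m+2) - 1))" 
    proof -
      show ?thesis using True by (intro aux2[OF e \<open>_ \<ge> 2 * (int m + 1)\<close>]) simp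
    qed
    then show ?thesis by (simp only: of_nat_less_iff)
  next
    case False
    then have "q \<ge> 3" "m = 0" using h by auto
    have "int q * (2 * int q - 3) \<ge> 3 * 3" using \<open>q \<ge> 3\<close> by (intro mult_mono) auto
    then have "int ((m+3) * q^(m+1)) < int ((m+2) * (q^(m+2) - 1))" 
    proof -
      have "int q * (2 * int q - 3) \<ge> 9" using \<open>_ \<ge> 3*3\<close> by simp
      then show ?thesis using e \<open>m = 0\<close> aux3[of "int ((m+2)*(q^(m+2)-1))" "int ((m+3)*q^(m+1))" "int q * (2 * int q - 3)"] by simp
    qed
    then show ?thesis by (simp only: of_nat_less_iff)
  qed
qed

lemma mainineq:
  fixes q m :: nat assumes q: "q \<ge> 2"
  shows "(m+2) * q^((m+2)*m) \<le> q^(\<Sum>k=1..m+1. k) * (\<Prod>j=1..m+1. q^j - 1)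
     \<and> ((q \<ge> 3 \<or> m \<ge> 2) \<longrightarrow> (m+2) * q^((m+2)*m) < q^(\<Sum>k=1..m+1. k) * (\<Prod>j=1..m+1. q^j - 1))"
proof (induction m)
  case 0
  have "2 * 1 \<le> q * (q - 1)" using q by (intro mult_le_mono) auto
  moreover have "q \<ge> 3 \<Longrightarrow> 3 * 2 \<le> q * (q - 1)" using q by (intro mult_le_mono) auto
  ultimately show ?case by auto
next
  case (Suc m)
  define L where "L = (m+2) * q^((m+2)*m)"
  define X where "X = q^(\<Sum>k=1..m+1. k) * (\<Prod>j=1..m+1. q^j - 1)"
  define M where "M = q^(m+2) * (q^(m+2) - 1)"
  have "q^1 \<le> q^(m+2)" using q by (intro power_increasing) auto
  then have "q^(m+2) \<ge> 2" using q by (metis power_one_right order_trans)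
  then have Mpos: "M > 0" unfolding M_def using q by simp
  have sum: "(\<Sum>k=1..Suc m+1. k) = (\<Sum>k=1..m+1. k) + (m+2)" by simp
  have X': "q^(\<Sum>k=1..Suc m+1. k) * (\<Prod>j=1..Suc m+1. q^j - 1) = X * M"
    unfolding X_def M_def sum by (simp add: power_add mult_ac)
  have ex: "(Suc m+2) * (Suc m) = (m+2)*m + (m+1) + (m+2)" by simp
  have L': "(Suc m+2) * q^((Suc m+2)*Suc m) = ((m+3) * q^(m+1)) * (q^((m+2)*m) * q^(m+2))"
  proof -
    have pe: "q^((Suc m+2)*Suc m) = q^((m+2)*m) * q^(m+1) * q^(m+2)"
      unfolding ex by (simp only: power_add[symmetric])
    have h3: "Suc m + 2 = m + 3" by simp
    have "(Suc m+2) * q^((Suc m+2)*Suc m) = (m+3) * (q^((m+2)*m) * q^(m+1) * q^(m+2))"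
      unfolding pe unfolding h3 by (rule refl)
    then show ?thesis by (simp only: mult_ac)
  qed
  have R: "((m+2) * (q^(m+2) - 1)) * (q^((m+2)*m) * q^(m+2)) = L * M"
    unfolding L_def M_def by (simp only: mult_ac)
  have P: "q^((m+2)*m) * q^(m+2) > 0" using q by simp
  have k1: "(m+3) * q^(m+1) \<le> (m+2) * (q^(m+2) - 1)" using key(1)[OF q] .
  have a1: "(Suc m+2) * q^((Suc m+2)*Suc m) \<le> L * M"
    unfolding L' R[symmetric] using k1 by (intro mult_right_mono) auto
  have IH1: "L \<le> X" using Suc.IH unfolding L_def X_def by auto
  have "L * M \<le> X * M" using IH1 by simp
  then have le: "(Suc m+2) * q^((Suc m+2)*Suc m) \<le> X * M" using a1 by linarith
  have lt: "(Suc m+2) * q^((Suc m+2)*Suc m) < X * M" if h: "q \<ge> 3 \<or> Suc m \<ge> 2"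
  proof (cases "q \<ge> 3")
    case True
    then have "L < X" using Suc.IH unfolding L_def X_def by auto
    then have "L * M < X * M" using Mpos by simp
    then show ?thesis using a1 by linarith
  next
    case False
    then have "m \<ge> 1" using h by auto
    then have "(m+3) * q^(m+1) < (m+2) * (q^(m+2) - 1)" using key(2)[OF q] by auto
    then have "((m+3) * q^(m+1)) * (q^((m+2)*m) * q^(m+2)) < ((m+2) * (q^(m+2) - 1)) * (q^((m+2)*m) * q^(m+2))"
      using P by simp
    then show ?thesis unfolding L' R using \<open>L * M \<le> X * M\<close> by linarith
  qed
  show ?case unfolding X' using le lt by blast
qed

theorem lemma5p6:
  fixes n a q :: nat
  assumes "n \<ge> 2"
    and "prime a" and "a dvd n"
    and "\<forall>p. prime p \<and> p dvd n \<longrightarrow> a \<le> p"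
    and "\<exists>p m. prime p \<and> m \<ge> 1 \<and> q = p ^ m"
  shows "(1 / real a) * (\<Prod>k\<in>{k. 1 \<le> k \<and> k \<le> n - 1 \<and> \<not> a dvd k}. (real q ^ n - real q ^ k))
           \<ge> real q powr (real n * (real n - real n / real a - 1))
       \<and> ((1 / real a) * (\<Prod>k\<in>{k. 1 \<le> k \<and> k \<le> n - 1 \<and> \<not> a dvd k}. (real q ^ n - real q ^ k))
           = real q powr (real n * (real n - real n / real a - 1))
          \<longrightarrow> (n, q) = (2, 2) \<or> (n, q) = (3, 2))"
proof -
  obtain p mm where p: "prime p" "mm \<ge> 1" "q = p ^ mm" using assms(5) by blast
  have p2: "p \<ge> 2" using p(1) prime_ge_2_nat by blast
  have "p^1 \<le> p^mm" using p2 p(2) by (intro power_increasing) auto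
  then have q2: "q \<ge> 2" using p p2 by simp
  have a2: "a \<ge> 2" using assms(2) prime_ge_2_nat by blast
  define d where "d = n div a"
  have nad: "n = a * d" using assms(3) unfolding d_def by simp
  have d1: "d \<ge> 1" using nad assms(1) by (cases d) auto
  have "2 * d \<le> a * d" using a2 by simp
  then have dn: "d + 1 \<le> n" using nad d1 by linarith
  have an: "a \<le> n" using assms(1,3) by (simp add: dvd_imp_le)
  define f where "f = (\<lambda>k. q^n - q^k)"
  define S where "S = {k. 1 \<le> k \<and> k \<le> n - 1 \<and> \<not> a dvd k}"
  define Rs where "Rs = {k. 1 \<le> k \<and> k \<le> n - 1 \<and> a dvd k}"
  have un: "{1..n-1} = S \<union> Rs" unfolding S_def Rs_def by auto
  have fS: "finite S" "finite Rs" unfolding S_def Rs_def by auto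
  have all: "(\<Prod>k=1..n-1. f k) = prod f S * prod f Rs"
    unfolding un using fS by (intro prod.union_disjoint) (auto simp: S_def Rs_def)
  have "Rs \<subseteq> (\<lambda>i. a * i) ` {1..d-1}"
  proof
    fix k assume "k \<in> Rs"
    then obtain i where k: "k = a * i" "1 \<le> k" "k \<le> n - 1" unfolding Rs_def by auto
    then have "i \<ge> 1" by (cases i) auto
    moreover have "i \<le> d - 1"
    proof -
      have "a * i < a * d" using k nad assms(1) by linarith
      then have "i < d" by simp
      then show ?thesis by simp
    qed
    ultimately show "k \<in> (\<lambda>i. a * i) ` {1..d-1}" using k by auto
  qed
  then have "card Rs \<le> card ((\<lambda>i. a * i) ` {1..d-1})" by (intro card_mono) auto
  also have "\<dots> \<le> card {1..d-1}" by (rule card_image_le) simp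
  finally have cR: "card Rs \<le> d - 1" by simp
  have fle: "f k \<le> q^n" for k unfolding f_def by simp
  have PR: "prod f Rs \<le> (q^n)^(d-1)"
    using cR fle q2 by (intro prod_le_power) auto
  have PR': "prod f Rs \<le> q^(n*(d-1))" using PR by (simp add: power_mult)
  obtain m where m: "n = m + 2" using assms(1) by (metis add.commute le_add_diff_inverse)
  have nm1: "n - 1 = m + 1" using m by simp
  have MI: "n * q^(n*(n-2)) \<le> (\<Prod>k=1..n-1. f k)
       \<and> ((q \<ge> 3 \<or> m \<ge> 2) \<longrightarrow> n * q^(n*(n-2)) < (\<Prod>k=1..n-1. f k))"
    using mainineq[OF q2, of m] prodall[of q n] q2 unfolding f_def nm1 m by simp
  define E where "E = q^(n*(n-d-1))"
  have ex0: "n-2 = (n-d-1)+(d-1)" using dn d1 by linarith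
  have ex: "n*(n-2) = n*(n-d-1) + n*(d-1)" unfolding ex0 by (rule add_mult_distrib2)
  have chain: "a * E * q^(n*(d-1)) \<le> n * q^(n*(n-2))"
    unfolding E_def ex power_add using an by simp
  have chain2: "prod f S * prod f Rs \<le> prod f S * q^(n*(d-1))" using PR' by simp
  have posq: "q^(n*(d-1)) > 0" using q2 by simp
  have main_le: "a * E \<le> prod f S"
  proof -
    have "a * E * q^(n*(d-1)) \<le> prod f S * q^(n*(d-1))" using chain MI[THEN conjunct1] all chain2 by linarith
    then show ?thesis by (rule mult_right_le_imp_le[OF _ posq])
  qed
  have main_eq: "(n, q) = (2, 2) \<or> (n, q) = (3, 2)" if h: "a * E = prod f S"
  proof -
    have hh: "a * E * q^(n*(d-1)) = prod f S * q^(n*(d-1))" using h by simp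
    have "n * q^(n*(n-2)) = (\<Prod>k=1..n-1. f k)" using chain MI[THEN conjunct1] all chain2 hh by linarith
    then have "\<not> (q \<ge> 3 \<or> m \<ge> 2)" using MI by auto
    then show ?thesis using q2 m by auto
  qed
  have Rq: "real q > 0" using q2 by simp
  have realprod: "(\<Prod>k\<in>S. (real q ^ n - real q ^ k)) = real (prod f S)"
    unfolding of_nat_prod f_def
  proof (rule prod.cong[OF refl])
    fix k assume "k \<in> S"
    then have "k \<le> n" unfolding S_def by auto
    then have "q^k \<le> q^n" using q2 by (intro power_increasing) auto
    then show "real q ^ n - real q ^ k = real (q^n - q^k)" by (simp add: of_nat_diff)
  qed
  have ndiv: "real n / real a = real d" using nad a2 by simp
  have pw: "real q powr (real n * (real n - real n / real a - 1)) = real E"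
  proof -
    have e1: "real n * (real n - real n / real a - 1) = real (n*(n-d-1))"
      unfolding ndiv using dn by (simp add: of_nat_diff)
    show ?thesis unfolding E_def e1 of_nat_power by (rule powr_realpow[OF Rq])
  qed
  have apos: "real a > 0" using a2 by simp
  have G1: "(1 / real a) * real (prod f S) \<ge> real E"
  proof -
    have "real a * real E \<le> real (prod f S)" using main_le by (metis of_nat_le_iff of_nat_mult)
    then show ?thesis using apos by (simp add: field_simps)
  qed
  have G2: "(1 / real a) * real (prod f S) = real E \<longrightarrow> (n, q) = (2, 2) \<or> (n, q) = (3, 2)"
  proof
    assume "(1 / real a) * real (prod f S) = real E"
    then have "real (prod f S) = real a * real E" using apos by (simp add: field_simps)
    then have "a * E = prod f S" by (metis of_nat_eq_iff of_nat_mult)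
    then show "(n, q) = (2, 2) \<or> (n, q) = (3, 2)" by (rule main_eq)
  qed
  show ?thesis using G1 G2 unfolding realprod[unfolded S_def] pw S_def by blast
qed

end
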